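(* Let $M_G$ be a mixed graph of order $n$ and write $\det(xI-N(M_G))=x^n+c_1x^{n-1}+\dots+c_{n-1}x+c_n$. Then for each $k$, $$c_k=\sum_{M_{G'}}(-1)^{-k+r(G')+l_{sn}(M_{G'})+l_n(M_{G'})}\cdot 2^{l_p(M_{G'})+l_n(M_{G'})},$$ where the sum runs over all elementary mixed subgraphs $M_{G'}$ of $M_G$ with $k$ vertices, $G'$ is the underlying graph of $M_{G'}$, and $l_p(M_{G'}),l_n(M_{G'}),l_{sn}(M_{G'})$ are the numbers of positive, negative and semi-negative mixed cycles in $M_{G'}$, respectively.
   Context: A mixed graph $M_G$ is obtained from a finite simple graph $G$ by orienting the edges of some subset of $E(G)$. With $\omega=\frac{1+\mathbf{i}\sqrt3}{2}$, $N(M_G)=(n_{st})$ has entry $\omega$ for an arc from $u_s$ to $u_t$, $\bar\omega$ for an arc from $u_t$ to $u_s$, $1$ for an undirected edge, $0$ otherwise. A mixed subgraph keeps the directions of $M_G$. A mixed cycle is a mixed graph whose underlying graph is a cycle; for a mixed cycle $v_1v_2\cdots v_lv_1$ its weight (in that direction) is $n_{12}n_{23}\cdots n_{(l-1)l}n_{l1}$. A mixed cycle is positive if its weight is $1$, negative if $-1$, semi-positive if its weight is in $\{\omega,\bar\omega\}$, semi-negative if in $\{-\omega,-\bar\omega\}$ (these notions do not depend on the direction). An elementary mixed graph is one in which every component is a single edge (directed or not) or a mixed cycle. For a simple graph $H$, $r(H)=|V(H)|-t(H)$ where $t(H)$ is the number of components. *)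

theory Defs
  imports Complex_Main "Jordan_Normal_Form.Char_Poly"
begin

text \<open>A mixed graph of order n: vertex set {0..<n}; E is the edge set of the
underlying simple graph (2-element subsets); D is the set of arcs, (u,v) \<in> D
meaning the edge {u,v} is oriented from u to v.\<close>

definition mixed_graph :: "nat \<Rightarrow> nat set set \<Rightarrow> (nat \<times> nat) set \<Rightarrow> bool" where
  "mixed_graph n E D \<longleftrightarrow>
     (\<forall>e\<in>E. \<exists>u v. e = {u, v} \<and> u \<noteq> v \<and> u < n \<and> v < n) \<and>
     (\<forall>(u,v)\<in>D. {u, v} \<in> E) \<and>
     (\<forall>(u,v)\<in>D. (v,u) \<notin> D)"

definition omega :: complex where
  "omega = (1 + \<i> * complex_of_real (sqrt 3)) / 2"

definition n_entry :: "nat set set \<Rightarrow> (nat \<times> nat) set \<Rightarrow> nat \<Rightarrow> nat \<Rightarrow> complex" where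
  "n_entry E D s t =
     (if (s,t) \<in> D then omega
      else if (t,s) \<in> D then cnj omega
      else if {s,t} \<in> E then 1 else 0)"

definition N_mat :: "nat \<Rightarrow> nat set set \<Rightarrow> (nat \<times> nat) set \<Rightarrow> complex mat" where
  "N_mat n E D = mat n n (\<lambda>(s,t). n_entry E D s t)"

text \<open>Subgraphs without isolated vertices are given by their edge set F.\<close>

definition verts :: "nat set set \<Rightarrow> nat set" where
  "verts F = \<Union>F"

definition adj_rel :: "nat set set \<Rightarrow> nat rel" where
  "adj_rel F = {(x,y). {x,y} \<in> F}"

definition component :: "nat set set \<Rightarrow> nat \<Rightarrow> nat set" where
  "component F v = {u \<in> verts F. (v,u) \<in> (adj_rel F)\<^sup>*}"

definition components :: "nat set set \<Rightarrow> nat set set" where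
  "components F = component F ` verts F"

definition comp_edges :: "nat set set \<Rightarrow> nat set \<Rightarrow> nat set set" where
  "comp_edges F C = {e \<in> F. e \<subseteq> C}"

definition rank_r :: "nat set set \<Rightarrow> nat" where
  "rank_r F = card (verts F) - card (components F)"

definition cycle_enum :: "nat list \<Rightarrow> nat set \<Rightarrow> nat set set \<Rightarrow> bool" where
  "cycle_enum vs C F \<longleftrightarrow> distinct vs \<and> length vs \<ge> 3 \<and> set vs = C \<and>
     F = {{vs ! i, vs ! ((i + 1) mod length vs)} | i. i < length vs}"

definition is_cycle :: "nat set \<Rightarrow> nat set set \<Rightarrow> bool" where
  "is_cycle C F \<longleftrightarrow> (\<exists>vs. cycle_enum vs C F)"

definition cycle_weight :: "nat set set \<Rightarrow> (nat \<times> nat) set \<Rightarrow> nat list \<Rightarrow> complex" where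
  "cycle_weight E D vs =
     (\<Prod>i<length vs. n_entry E D (vs ! i) (vs ! ((i + 1) mod length vs)))"

definition cycle_has_weight_in ::
  "nat set set \<Rightarrow> (nat \<times> nat) set \<Rightarrow> nat set set \<Rightarrow> complex set \<Rightarrow> nat set \<Rightarrow> bool" where
  "cycle_has_weight_in E D F W C \<longleftrightarrow>
     (\<exists>vs. cycle_enum vs C (comp_edges F C) \<and> cycle_weight E D vs \<in> W)"

definition num_cycles ::
  "nat set set \<Rightarrow> (nat \<times> nat) set \<Rightarrow> nat set set \<Rightarrow> complex set \<Rightarrow> nat" where
  "num_cycles E D F W = card {C \<in> components F. cycle_has_weight_in E D F W C}"

definition l_p where "l_p E D F = num_cycles E D F {1}"
definition l_n where "l_n E D F = num_cycles E D F {-1}"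
definition l_sn where "l_sn E D F = num_cycles E D F {- omega, - cnj omega}"

text \<open>elementary mixed subgraph (given by its edge set F \<subseteq> E; arcs inherited):
every component is a single edge or a cycle\<close>
definition elementary :: "nat set set \<Rightarrow> nat set set \<Rightarrow> bool" where
  "elementary E F \<longleftrightarrow> F \<subseteq> E \<and>
     (\<forall>C\<in>components F. card C = 2 \<or> is_cycle C (comp_edges F C))"

end

theory Submission
  imports Defs "HOL-Combinatorics.Cycles"
begin


definition pgraph :: "(nat \<Rightarrow> nat) \<Rightarrow> nat set set" where
  "pgraph p = {{i, p i} | i. p i \<noteq> i}"

definition twosets :: "nat set set \<Rightarrow> bool" where
  "twosets F \<longleftrightarrow> (\<forall>e\<in>F. \<exists>u v. e = {u, v} \<and> u \<noteq> v)"

lemma adj_sym: "sym (adj_rel F)"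
  unfolding adj_rel_def sym_def by (auto simp: insert_commute)

lemma rtr_sym: "(x,y) \<in> (adj_rel F)\<^sup>* \<Longrightarrow> (y,x) \<in> (adj_rel F)\<^sup>*"
  using adj_sym sym_rtrancl by (metis symD)

lemma comp_self: "x \<in> verts F \<Longrightarrow> x \<in> component F x"
  unfolding component_def by auto

lemma comp_eq: assumes "y \<in> component F x" shows "component F y = component F x"
proof -
  have xy: "(x,y) \<in> (adj_rel F)\<^sup>*" using assms unfolding component_def by auto
  hence yx: "(y,x) \<in> (adj_rel F)\<^sup>*" by (rule rtr_sym)
  show ?thesis unfolding component_def using xy yx
    by (auto intro: rtrancl_trans)
qed

lemma comp_sub: "component F x \<subseteq> verts F"
  unfolding component_def by auto

lemma edge_in_comp:
  assumes "twosets F" "e \<in> F" "x \<in> e" shows "e \<subseteq> component F x"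
proof -
  obtain u v where e: "e = {u,v}" "u \<noteq> v" using assms unfolding twosets_def by blast
  have ver: "e \<subseteq> verts F" using assms(2) unfolding verts_def by auto
  have "(u,v) \<in> adj_rel F" "(v,u) \<in> adj_rel F" using assms(2) e unfolding adj_rel_def
    by (auto simp: insert_commute)
  then show ?thesis using assms(3) e ver unfolding component_def by auto
qed

lemma comps_disjoint:
  assumes "C \<in> components F" "C' \<in> components F" "C \<noteq> C'" shows "C \<inter> C' = {}"
proof (rule ccontr)
  assume "C \<inter> C' \<noteq> {}"
  then obtain z where z: "z \<in> C" "z \<in> C'" by blast
  obtain x x' where "C = component F x" "C' = component F x'"
    using assms unfolding components_def by auto
  then show False using comp_eq[of z F x] comp_eq[of z F x'] z assms(3) by auto
qed

lemma Union_comps: "\<Union>(components F) = verts F"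
  unfolding components_def using comp_self comp_sub by blast

lemma comp_nonempty: "C \<in> components F \<Longrightarrow> C \<noteq> {}"
  unfolding components_def using comp_self by blast

lemma comp_in_verts: "C \<in> components F \<Longrightarrow> C \<subseteq> verts F"
  unfolding components_def using comp_sub by blast

lemma finite_verts: "finite F \<Longrightarrow> twosets F \<Longrightarrow> finite (verts F)"
  unfolding verts_def twosets_def by (auto)

lemma finite_comps: "finite F \<Longrightarrow> twosets F \<Longrightarrow> finite (components F)"
  unfolding components_def using finite_verts by auto

lemma comp_of_mem: "C \<in> components F \<Longrightarrow> x \<in> C \<Longrightarrow> C = component F x"
  unfolding components_def using comp_eq by blast

lemma verts_pgraph: assumes "bij p" shows "verts (pgraph p) = {x. p x \<noteq> x}"
proof -
  have "p (p i) \<noteq> p i" if "p i \<noteq> i" for i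
    using that bij_is_inj[OF assms] by (metis injD)
  then show ?thesis unfolding verts_def pgraph_def by auto
qed

lemma twosets_pgraph: "twosets (pgraph p)"
  unfolding twosets_def pgraph_def by auto

lemma pgraph_inv_sub: assumes "bij p" shows "pgraph (Hilbert_Choice.inv p) \<subseteq> pgraph p"
proof
  have b: "p (Hilbert_Choice.inv p i) = i" for i using assms by (simp add: bij_is_surj surj_f_inv_f)
  fix e assume "e \<in> pgraph (Hilbert_Choice.inv p)"
  then obtain i where i: "e = {i, Hilbert_Choice.inv p i}" "Hilbert_Choice.inv p i \<noteq> i"
    unfolding pgraph_def by auto
  let ?j = "Hilbert_Choice.inv p i"
  have "e = {?j, p ?j}" "p ?j \<noteq> ?j" using i b[of i] by (auto simp: insert_commute)
  then show "e \<in> pgraph p" unfolding pgraph_def by blast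
qed

lemma pgraph_inv: assumes "bij p" shows "pgraph (Hilbert_Choice.inv p) = pgraph p"
  using pgraph_inv_sub[OF assms] pgraph_inv_sub[OF bij_imp_bij_inv[OF assms]]
  by (simp add: inv_inv_eq[OF assms])

lemma cyc_next: assumes "distinct vs" "i < length vs"
  shows "cycle_of_list vs (vs ! i) = vs ! (Suc i mod length vs)"
proof -
  have "map (cycle_of_list vs ^^ 1) vs = rotate 1 vs" by (rule cyclic_rotation[OF assms(1)])
  then have "(map (cycle_of_list vs ^^ 1) vs) ! i = rotate 1 vs ! i" by simp
  then show ?thesis using assms by (simp add: nth_rotate1)
qed

lemma suc_mod_neq: assumes "i < l" "2 \<le> l" shows "Suc i mod l \<noteq> i"
proof (cases "Suc i < l")
  case False
  then have "Suc i = l" using assms by simp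
  then show ?thesis using assms by auto
qed simp

lemma pgraph_cycle: assumes "distinct vs" "2 \<le> length vs"
  shows "pgraph (cycle_of_list vs) = {{vs ! i, vs ! ((i + 1) mod length vs)} | i. i < length vs}"
proof -
  let ?c = "cycle_of_list vs"
  have out: "?c x = x" if "x \<notin> set vs" for x using id_outside_supp that by metis
  have inn: "?c (vs ! i) \<noteq> vs ! i" if "i < length vs" for i
  proof -
    have "Suc i mod length vs < length vs" by (rule mod_less_divisor) (use that in auto)
    then show ?thesis
      using cyc_next[OF assms(1) that] suc_mod_neq[OF that assms(2)] assms(1) that
      by (simp add: nth_eq_iff_index_eq)
  qed
  show ?thesis unfolding pgraph_def
  proof (rule equalityI; rule subsetI)
    fix e assume "e \<in> {{i, ?c i} |i. ?c i \<noteq> i}"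
    then obtain x where x: "e = {x, ?c x}" "?c x \<noteq> x" by auto
    then have "x \<in> set vs" using out by blast
    then obtain i where i: "i < length vs" "x = vs ! i" by (metis in_set_conv_nth)
    then show "e \<in> {{vs ! i, vs ! ((i + 1) mod length vs)} | i. i < length vs}"
      using x cyc_next[OF assms(1) i(1)] by auto
  next
    fix e assume "e \<in> {{vs ! i, vs ! ((i + 1) mod length vs)} | i. i < length vs}"
    then obtain i where i: "i < length vs" "e = {vs ! i, vs ! ((i + 1) mod length vs)}" by auto
    then show "e \<in> {{i, ?c i} |i. ?c i \<noteq> i}"
      using cyc_next[OF assms(1) i(1)] inn[OF i(1)] by auto
  qed
qed

lemma sign_cycle: "distinct vs \<Longrightarrow> vs \<noteq> [] \<Longrightarrow> sign (cycle_of_list vs) = (-1) ^ (length vs - 1)"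
proof (induct vs rule: cycle_of_list.induct)
  case (1 i j cs)
  have "sign (cycle_of_list (i # j # cs)) = sign (transpose i j) * sign (cycle_of_list (j # cs))"
    by (simp add: sign_compose permutation_of_cycle permutation_swap_id)
  also have "\<dots> = - sign (cycle_of_list (j # cs))" using 1(2) by (simp add: sign_swap_id)
  also have "\<dots> = (-1) ^ (length (i # j # cs) - 1)" using 1 by simp
  finally show ?case .
qed auto



lemma comp_perm_elem:
  assumes tw: "twosets F" and fin: "finite F" and C: "C \<in> components F"
    and q: "q permutes C" and pg: "pgraph q = comp_edges F C"
  shows "card C = 2 \<or> is_cycle C (comp_edges F C)"
proof -
  obtain c where c: "c \<in> verts F" "C = component F c" using C unfolding components_def by auto
  have cC: "c \<in> C" using c comp_self by auto
  have finC: "finite C" using comp_in_verts[OF C] finite_verts[OF fin tw] finite_subset by blast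
  have perm: "permutation q" using q finC permutes_imp_permutation by blast
  have inj: "inj q" using permutes_inj[OF q] .
  have moved: "q x \<noteq> x" if "x \<in> C" for x
  proof
    assume fx: "q x = x"
    from that comp_in_verts[OF C] have "x \<in> verts F" by auto
    then obtain e where e: "e \<in> F" "x \<in> e" unfolding verts_def by auto
    have "e \<subseteq> C" using edge_in_comp[OF tw e] comp_of_mem[OF C that] by simp
    then have "e \<in> pgraph q" using pg e unfolding comp_edges_def by auto
    then obtain i where i: "e = {i, q i}" "q i \<noteq> i" unfolding pgraph_def by auto
    then have "x = i \<or> x = q i" using e by auto
    then show False using fx i inj by (metis injD)
  qed
  define vs where "vs = support q c"
  have dist: "distinct vs" using cycle_of_permutation[OF perm] vs_def by simp
  have setvs: "set vs = range (\<lambda>i. (q ^^ i) c)" using support_set[OF perm] vs_def by simp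
  have qC: "(q ^^ i) c \<in> C" for i
    by (induct i) (auto simp: cC permutes_in_image[OF q])
  have Csub: "C \<subseteq> set vs"
  proof
    fix y assume "y \<in> C"
    then have "(c,y) \<in> (adj_rel F)\<^sup>*" using c unfolding component_def by auto
    then show "y \<in> set vs"
    proof (induct rule: rtrancl_induct)
      case base
      have "c = (q ^^ 0) c" by simp
      then show ?case unfolding setvs by blast
    next
      case (step x y)
      obtain j where xj: "x = (q ^^ j) c" using step.hyps(3) setvs by auto
      have xC: "x \<in> C" using qC xj by simp
      have e: "{x,y} \<in> F" using step.hyps(2) unfolding adj_rel_def by simp
      have "{x,y} \<subseteq> C" using edge_in_comp[OF tw e, of x] comp_of_mem[OF C xC] by simp
      then have "{x,y} \<in> pgraph q" using pg e unfolding comp_edges_def by simp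
      then obtain i where i: "{x,y} = {i, q i}" "q i \<noteq> i" unfolding pgraph_def by auto
      then have "(y = q x) \<or> (x = q y)" by (auto simp: doubleton_eq_iff)
      then show ?case
      proof
        assume "y = q x" then have "y = (q ^^ Suc j) c" using xj by simp
        then show ?thesis using setvs by blast
      next
        assume xq: "x = q y"
        define l where "l = least_power q c"
        have l: "l > 0" "(q^^l) c = c" using least_power_of_permutation[OF perm] l_def by auto
        have "q ((q ^^ (j + l - 1)) c) = (q ^^ Suc (j + l - 1)) c" by simp
        also have "Suc (j + l - 1) = j + l" using l(1) by simp
        also have "(q ^^ (j + l)) c = x" using l(2) xj by (simp add: funpow_add)
        finally have "q ((q ^^ (j + l - 1)) c) = q y" using xq by simp
        then have "y = (q ^^ (j + l - 1)) c" using inj by (metis injD)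
        then show ?thesis using setvs by blast
      qed
    qed
  qed
  have setC: "set vs = C" using Csub setvs qC by auto
  have qcyc: "q = cycle_of_list vs"
  proof
    fix x show "q x = cycle_of_list vs x"
    proof (cases "x \<in> C")
      case True then show ?thesis using cycle_restrict[OF perm, of x c] setC vs_def by simp
    next
      case False then show ?thesis using permutes_not_in[OF q] id_outside_supp[of x vs] setC by simp
    qed
  qed
  have len: "length vs = card C" using distinct_card[OF dist] setC by simp
  have "q c \<noteq> c" using moved cC by simp
  then have "Suc 0 < least_power q c" using least_power_gt_one[OF perm] by simp
  then have l2: "2 \<le> length vs" using vs_def by simp
  have edges: "comp_edges F C = {{vs ! i, vs ! ((i + 1) mod length vs)} | i. i < length vs}"
    using pg qcyc pgraph_cycle[OF dist l2] by simp
  show ?thesis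
  proof (cases "length vs = 2")
    case True then show ?thesis using len by simp
  next
    case False
    then have "cycle_enum vs C (comp_edges F C)" unfolding cycle_enum_def using dist l2 setC edges by simp
    then show ?thesis unfolding is_cycle_def by blast
  qed
qed



lemma dir_lemma:
  assumes st: "\<forall>x\<in>C. \<sigma> x \<in> C \<and> \<tau> x \<in> C \<and> \<sigma> (\<tau> x) = x \<and> \<tau> (\<sigma> x) = x \<and> \<sigma> x \<noteq> \<tau> x"
    and qn: "\<forall>x\<in>C. q x = \<sigma> x \<or> q x = \<tau> x" and no2: "\<forall>x\<in>C. q (q x) \<noteq> x"
    and inj: "inj q" and sur: "\<forall>x\<in>C. \<exists>w\<in>C. q w = x"
    and x: "x \<in> C" "q x = \<sigma> x"
  shows "q (\<sigma> x) = \<sigma> (\<sigma> x)" "q (\<tau> x) = \<sigma> (\<tau> x)"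
proof -
  have y: "\<sigma> x \<in> C" "\<tau> (\<sigma> x) = x" using st x by auto
  show "q (\<sigma> x) = \<sigma> (\<sigma> x)"
  proof (rule ccontr)
    assume "q (\<sigma> x) \<noteq> \<sigma> (\<sigma> x)"
    then have "q (\<sigma> x) = x" using qn y by metis
    then show False using no2 x by metis
  qed
next
  have u: "\<tau> x \<in> C" "\<sigma> (\<tau> x) = x" using st x by auto
  show "q (\<tau> x) = \<sigma> (\<tau> x)"
  proof (rule ccontr)
    assume a: "q (\<tau> x) \<noteq> \<sigma> (\<tau> x)"
    obtain w where w: "w \<in> C" "q w = x" using sur x by blast
    have "q w = \<sigma> w \<or> q w = \<tau> w" using qn w by blast
    then show False
    proof
      assume "q w = \<sigma> w"
      then have "\<tau> x = w" using w st by metis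
      then show False using a u w by simp
    next
      assume "q w = \<tau> w"
      then have "w = \<sigma> x" using w st by metis
      then show False using no2 x w by metis
    qed
  qed
qed

lemma cycle_unique:
  assumes rho: "\<rho> permutes C" and nofix: "\<forall>x\<in>C. \<rho> x \<noteq> x" and no2r: "\<forall>x\<in>C. \<rho> (\<rho> x) \<noteq> x"
    and cC: "c \<in> C" and conn: "\<forall>x\<in>C. \<exists>j. x = (\<rho>^^j) c"
    and q: "q permutes C" and pg: "pgraph q = pgraph \<rho>"
  shows "q = \<rho> \<or> q = Hilbert_Choice.inv \<rho>"
proof -
  let ?ri = "Hilbert_Choice.inv \<rho>"
  have ri: "\<rho> (?ri x) = x" "?ri (\<rho> x) = x" for x using permutes_inverses[OF rho] by auto
  have riC: "?ri x \<in> C \<longleftrightarrow> x \<in> C" for x using permutes_in_image[OF permutes_inv[OF rho]] .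
  have rC: "\<rho> x \<in> C \<longleftrightarrow> x \<in> C" for x using permutes_in_image[OF rho] .
  have rneq: "\<rho> x \<noteq> ?ri x" if "x \<in> C" for x using no2r that ri by metis
  have edge: "{x, y} \<in> pgraph \<rho> \<longleftrightarrow> y = \<rho> x \<or> y = ?ri x" if "x \<in> C" for x y
  proof
    assume "{x, y} \<in> pgraph \<rho>"
    then obtain i where i: "{x,y} = {i, \<rho> i}" "\<rho> i \<noteq> i" unfolding pgraph_def by auto
    then show "y = \<rho> x \<or> y = ?ri x" using ri by (auto simp: doubleton_eq_iff)
  next
    assume "y = \<rho> x \<or> y = ?ri x"
    then show "{x, y} \<in> pgraph \<rho>"
    proof
      assume "y = \<rho> x" then show ?thesis using nofix that unfolding pgraph_def by auto
    next
      assume y: "y = ?ri x"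
      have "?ri x \<in> C" using riC that by simp
      then have "\<rho> (?ri x) \<noteq> ?ri x" using nofix by simp
      then show ?thesis using y ri unfolding pgraph_def by (auto simp: insert_commute intro!: exI[of _ "?ri x"])
    qed
  qed
  have inj: "inj q" using permutes_inj[OF q] .
  have qC: "q x \<in> C \<longleftrightarrow> x \<in> C" for x using permutes_in_image[OF q] .
  have qmoved: "q x \<noteq> x" if "x \<in> C" for x
  proof
    assume fx: "q x = x"
    have "{x, \<rho> x} \<in> pgraph q" using pg edge[OF that] by simp
    then obtain i where i: "{x, \<rho> x} = {i, q i}" "q i \<noteq> i" unfolding pgraph_def by auto
    then show False using fx inj nofix that by (auto simp: doubleton_eq_iff dest: injD)
  qed
  have qn: "\<forall>x\<in>C. q x = \<rho> x \<or> q x = ?ri x"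
  proof
    fix x assume x: "x \<in> C"
    have "{x, q x} \<in> pgraph q" using qmoved[OF x] unfolding pgraph_def by auto
    then show "q x = \<rho> x \<or> q x = ?ri x" using pg edge[OF x] by simp
  qed
  have no2: "\<forall>x\<in>C. q (q x) \<noteq> x"
  proof (intro ballI notI)
    fix x assume x: "x \<in> C" and qq: "q (q x) = x"
    show False
    proof (cases "q x = \<rho> x")
      case True
      have "{x, ?ri x} \<in> pgraph q" using pg edge[OF x] by simp
      then obtain i where i: "{x, ?ri x} = {i, q i}" "q i \<noteq> i" unfolding pgraph_def by auto
      then have "(x = i \<and> ?ri x = q i) \<or> (x = q i \<and> ?ri x = i)" by (auto simp: doubleton_eq_iff)
      then show False
      proof
        assume "x = i \<and> ?ri x = q i" then have "q x = ?ri x" by metis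
        then show False using True rneq[OF x] by simp
      next
        assume "x = q i \<and> ?ri x = i"
        then have "q (?ri x) = q (q x)" using qq by metis
        then have "?ri x = q x" using inj by (metis injD)
        then show False using True rneq[OF x] by simp
      qed
    next
      case False
      then have qx: "q x = ?ri x" using qn x by blast
      have "{x, \<rho> x} \<in> pgraph q" using pg edge[OF x] by simp
      then obtain i where i: "{x, \<rho> x} = {i, q i}" "q i \<noteq> i" unfolding pgraph_def by auto
      then have "(x = i \<and> \<rho> x = q i) \<or> (x = q i \<and> \<rho> x = i)" by (auto simp: doubleton_eq_iff)
      then show False
      proof
        assume "x = i \<and> \<rho> x = q i" then show False using False by metis
      next
        assume "x = q i \<and> \<rho> x = i"
        then have "q (\<rho> x) = q (q x)" using qq by metis
        then have "\<rho> x = q x" using inj by (metis injD)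
        then show False using False by simp
      qed
    qed
  qed
  have sur: "\<forall>x\<in>C. \<exists>w\<in>C. q w = x"
  proof
    fix x assume x: "x \<in> C"
    have "q (Hilbert_Choice.inv q x) = x" using permutes_inverses[OF q] by simp
    moreover have "Hilbert_Choice.inv q x \<in> C" using permutes_in_image[OF permutes_inv[OF q]] x by simp
    ultimately show "\<exists>w\<in>C. q w = x" by blast
  qed
  have st1: "\<forall>x\<in>C. \<rho> x \<in> C \<and> ?ri x \<in> C \<and> \<rho> (?ri x) = x \<and> ?ri (\<rho> x) = x \<and> \<rho> x \<noteq> ?ri x"
    using rC riC ri rneq by blast
  have st2: "\<forall>x\<in>C. ?ri x \<in> C \<and> \<rho> x \<in> C \<and> ?ri (\<rho> x) = x \<and> \<rho> (?ri x) = x \<and> ?ri x \<noteq> \<rho> x"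
    using rC riC ri rneq by metis
  have qn2: "\<forall>x\<in>C. q x = ?ri x \<or> q x = \<rho> x" using qn by blast
  have outr: "\<rho> x = x" "?ri x = x" "q x = x" if "x \<notin> C" for x
    using permutes_not_in[OF rho] permutes_not_in[OF permutes_inv[OF rho]] permutes_not_in[OF q] that
    by auto
  have rjC: "(\<rho>^^j) c \<in> C" for j by (induct j) (auto simp: cC rC)
  have "q c = \<rho> c \<or> q c = ?ri c" using qn cC by blast
  then show ?thesis
  proof
    assume qc: "q c = \<rho> c"
    have all: "q ((\<rho>^^j) c) = \<rho> ((\<rho>^^j) c)" for j
    proof (induct j)
      case 0 then show ?case using qc by simp
    next
      case (Suc j)
      show ?case using dir_lemma(1)[OF st1 qn no2 inj sur rjC[of j] Suc] by simp
    qed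
    have "q x = \<rho> x" for x
    proof (cases "x \<in> C")
      case True then obtain j where "x = (\<rho>^^j) c" using conn by blast
      then show ?thesis using all by simp
    qed (simp add: outr)
    then show ?thesis by blast
  next
    assume qc: "q c = ?ri c"
    have all: "q ((\<rho>^^j) c) = ?ri ((\<rho>^^j) c)" for j
    proof (induct j)
      case 0 then show ?case using qc by simp
    next
      case (Suc j)
      show ?case using dir_lemma(2)[OF st2 qn2 no2 inj sur rjC[of j] Suc] by simp
    qed
    have "q x = ?ri x" for x
    proof (cases "x \<in> C")
      case True then obtain j where "x = (\<rho>^^j) c" using conn by blast
      then show ?thesis using all by simp
    qed (simp add: outr)
    then show ?thesis by blast
  qed
qed

lemma mod2_neq: assumes "i < l" "3 \<le> l" shows "Suc (Suc i mod l) mod l \<noteq> i"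
proof -
  have "Suc (Suc i mod l) mod l = (i + 2) mod l" by (simp add: mod_Suc_eq)
  moreover have "(i + 2) mod l \<noteq> i"
  proof (cases "i + 2 < l")
    case True then show ?thesis by simp
  next
    case False
    then have "(i + 2) mod l = i + 2 - l" using assms by (simp add: le_mod_geq)
    then show ?thesis using assms False by simp
  qed
  ultimately show ?thesis by simp
qed

lemma cycle_list_props:
  assumes d: "distinct vs" and l3: "3 \<le> length vs"
  shows "cycle_of_list vs permutes set vs"
    "\<forall>x\<in>set vs. cycle_of_list vs x \<noteq> x"
    "\<forall>x\<in>set vs. cycle_of_list vs (cycle_of_list vs x) \<noteq> x"
    "\<forall>x\<in>set vs. \<exists>j. x = (cycle_of_list vs ^^ j) (vs ! 0)"
proof -
  let ?c = "cycle_of_list vs"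
  let ?l = "length vs"
  show "?c permutes set vs" by (rule cycle_permutes)
  have ml: "Suc i mod ?l < ?l" for i using l3 by (intro mod_less_divisor) (cases vs; simp)
  show "\<forall>x\<in>set vs. ?c x \<noteq> x"
  proof
    fix x assume "x \<in> set vs"
    then obtain i where i: "i < ?l" "x = vs ! i" by (metis in_set_conv_nth)
    then show "?c x \<noteq> x" using cyc_next[OF d i(1)] suc_mod_neq[OF i(1)] l3 d ml[of i]
      by (simp add: nth_eq_iff_index_eq)
  qed
  show "\<forall>x\<in>set vs. ?c (?c x) \<noteq> x"
  proof
    fix x assume "x \<in> set vs"
    then obtain i where i: "i < ?l" "x = vs ! i" by (metis in_set_conv_nth)
    have "?c (?c x) = vs ! (Suc (Suc i mod ?l) mod ?l)"
      using cyc_next[OF d i(1)] cyc_next[OF d ml[of i]] i by simp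
    then show "?c (?c x) \<noteq> x" using mod2_neq[OF i(1) l3] i d ml[of "Suc i mod ?l"]
      by (simp add: nth_eq_iff_index_eq)
  qed
  show "\<forall>x\<in>set vs. \<exists>j. x = (?c ^^ j) (vs ! 0)"
  proof
    fix x assume "x \<in> set vs"
    then obtain i where i: "i < ?l" "x = vs ! i" by (metis in_set_conv_nth)
    have "map (?c ^^ i) vs = rotate i vs" by (rule cyclic_rotation[OF d])
    then have "(map (?c ^^ i) vs) ! 0 = rotate i vs ! 0" by simp
    moreover have "(map (?c ^^ i) vs) ! 0 = (?c ^^ i) (vs ! 0)" using l3 by (intro nth_map) (cases vs; simp)
    moreover have "rotate i vs ! 0 = vs ! ((i + 0) mod ?l)" using l3 by (intro nth_rotate) (cases vs; simp)
    ultimately have "(?c ^^ i) (vs ! 0) = vs ! i" using i by simp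
    then show "\<exists>j. x = (?c ^^ j) (vs ! 0)" using i by metis
  qed
qed



definition restr :: "nat set \<Rightarrow> (nat \<Rightarrow> nat) \<Rightarrow> nat \<Rightarrow> nat" where
  "restr C p = (\<lambda>i. if i \<in> C then p i else i)"

definition Sset :: "nat set set \<Rightarrow> (nat set \<Rightarrow> (nat \<Rightarrow> nat) set) \<Rightarrow> (nat \<Rightarrow> nat) set" where
  "Sset S Q = {p. p permutes \<Union>S \<and> (\<forall>C\<in>S. restr C p \<in> Q C)}"

lemma restr_perm_in: "restr D p permutes D \<Longrightarrow> i \<in> D \<Longrightarrow> p i \<in> D"
  using permutes_in_image[of "restr D p" D i] unfolding restr_def by auto

lemma restr_perm_onto: assumes "restr D p permutes D" "j \<in> D" shows "\<exists>i\<in>D. p i = j"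
proof -
  obtain i where "restr D p i = j" using permutes_surj[OF assms(1)] by (metis surjD)
  moreover then have "i \<in> D" using permutes_in_image[OF assms(1), of i] assms(2) by simp
  ultimately show ?thesis unfolding restr_def by auto
qed

lemma Sset_empty: "Sset {} Q = {id}"
  unfolding Sset_def by auto

lemma Sset_insert:
  assumes fin: "finite S" "finite C" "\<forall>D\<in>S. finite D" and CU: "C \<inter> \<Union>S = {}"
    and QC: "Q C \<subseteq> {q. q permutes C}" and QD: "\<forall>D\<in>S. Q D \<subseteq> {q. q permutes D}"
  shows "Sset (insert C S) Q = (\<lambda>(q,p'). q \<circ> p') ` (Q C \<times> Sset S Q)"
    "inj_on (\<lambda>(q,p'). q \<circ> p') (Q C \<times> Sset S Q)"
proof -
  let ?U = "\<Union>S"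
  have key: "(q \<circ> p') i = (if i \<in> C then q i else if i \<in> ?U then p' i else i)"
    if q: "q permutes C" and p': "p' permutes ?U" for q p' i
  proof -
    have "i \<in> C \<Longrightarrow> p' i = i" using permutes_not_in[OF p'] CU by blast
    moreover have "i \<in> ?U \<Longrightarrow> q (p' i) = p' i"
      using permutes_not_in[OF q] permutes_in_image[OF p'] CU by blast
    moreover have "i \<notin> C \<Longrightarrow> i \<notin> ?U \<Longrightarrow> q (p' i) = i"
      using permutes_not_in[OF q] permutes_not_in[OF p'] by simp
    ultimately show ?thesis by auto
  qed
  have restrC: "restr C (q \<circ> p') = q" if q: "q permutes C" and p': "p' permutes ?U" for q p'
    unfolding restr_def using key[OF q p'] permutes_not_in[OF q] by auto
  have restrU: "restr ?U (q \<circ> p') = p'" if q: "q permutes C" and p': "p' permutes ?U" for q p'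
    unfolding restr_def using key[OF q p'] permutes_not_in[OF p'] CU by (auto simp: fun_eq_iff)
  have restrD: "restr D (q \<circ> p') = restr D p'" if q: "q permutes C" and p': "p' permutes ?U"
    and D: "D \<in> S" for q p' D
    unfolding restr_def using key[OF q p'] D CU by (auto simp: fun_eq_iff)
  show "inj_on (\<lambda>(q,p'). q \<circ> p') (Q C \<times> Sset S Q)"
  proof (rule inj_onI, clarify)
    fix q p' q2 p2 assume a: "q \<in> Q C" "p' \<in> Sset S Q" "q2 \<in> Q C" "p2 \<in> Sset S Q"
      and eq: "q \<circ> p' = q2 \<circ> p2"
    have pm: "q permutes C" "q2 permutes C" "p' permutes ?U" "p2 permutes ?U"
      using a QC unfolding Sset_def by auto
    show "q = q2 \<and> p' = p2"
      using restrC[OF pm(1,3)] restrC[OF pm(2,4)] restrU[OF pm(1,3)] restrU[OF pm(2,4)] eq by metis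
  qed
  show "Sset (insert C S) Q = (\<lambda>(q,p'). q \<circ> p') ` (Q C \<times> Sset S Q)"
  proof (rule equalityI; rule subsetI)
    fix p assume p: "p \<in> Sset (insert C S) Q"
    then have pp: "p permutes C \<union> ?U" and rq: "restr C p \<in> Q C" and rD: "\<forall>D\<in>S. restr D p \<in> Q D"
      unfolding Sset_def by auto
    let ?q = "restr C p" and ?p' = "restr ?U p"
    have qperm: "?q permutes C" using rq QC by auto
    have Dperm: "restr D p permutes D" if "D \<in> S" for D using rD QD that by auto
    have img: "p i \<in> ?U" if "i \<in> ?U" for i using that restr_perm_in[OF Dperm] by blast
    have onto: "\<exists>i\<in>?U. p i = j" if "j \<in> ?U" for j using that restr_perm_onto[OF Dperm] by blast
    have bijU: "bij_betw p ?U ?U"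
      unfolding bij_betw_def using permutes_inj_on[OF pp] img onto by blast
    have "bij_betw ?p' ?U ?U" using bijU by (rule bij_betw_cong[THEN iffD1, rotated]) (simp add: restr_def)
    then have p'perm: "?p' permutes ?U" by (rule bij_imp_permutes) (simp add: restr_def)
    have rD': "restr D ?p' = restr D p" if "D \<in> S" for D using that unfolding restr_def by (auto simp: fun_eq_iff)
    have p'S: "?p' \<in> Sset S Q" unfolding Sset_def using p'perm rD' rD by simp
    have "p = ?q \<circ> ?p'"
    proof
      fix i show "p i = (?q \<circ> ?p') i"
        unfolding key[OF qperm p'perm] using permutes_not_in[OF pp, of i] img[of i] CU
        unfolding restr_def by auto
    qed
    then show "p \<in> (\<lambda>(q,p'). q \<circ> p') ` (Q C \<times> Sset S Q)" using rq p'S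
      by (intro image_eqI[of _ _ "(?q, ?p')"]) auto
  next
    fix p assume "p \<in> (\<lambda>(q,p'). q \<circ> p') ` (Q C \<times> Sset S Q)"
    then obtain q p' where a: "q \<in> Q C" "p' \<in> Sset S Q" "p = q \<circ> p'" by auto
    have pm: "q permutes C" "p' permutes ?U" using a QC unfolding Sset_def by auto
    have "q permutes C \<union> ?U" by (rule permutes_subset[OF pm(1)]) auto
    moreover have "p' permutes C \<union> ?U" by (rule permutes_subset[OF pm(2)]) auto
    ultimately have "p permutes C \<union> ?U" unfolding a(3) by (rule permutes_compose[rotated])
    moreover have "restr C p \<in> Q C" using restrC[OF pm] a by simp
    moreover have "\<forall>D\<in>S. restr D p \<in> Q D" using restrD[OF pm] a unfolding Sset_def by auto
    ultimately show "p \<in> Sset (insert C S) Q" unfolding Sset_def by simp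
  qed
qed

lemma glue_prod:
  fixes a :: "nat \<Rightarrow> nat \<Rightarrow> complex"
  assumes "finite S" "\<forall>C\<in>S. finite C" "\<forall>C\<in>S. \<forall>C'\<in>S. C \<noteq> C' \<longrightarrow> C \<inter> C' = {}"
    "\<forall>C\<in>S. Q C \<subseteq> {q. q permutes C}"
  shows "(\<Sum>p\<in>Sset S Q. of_int (sign p) * (\<Prod>i\<in>\<Union>S. a i (p i)))
       = (\<Prod>C\<in>S. \<Sum>q\<in>Q C. of_int (sign q) * (\<Prod>i\<in>C. a i (q i)))"
  using assms
proof (induct S rule: finite_induct)
  case empty
  then show ?case by (simp add: Sset_empty)
next
  case (insert C S)
  let ?U = "\<Union>S"
  have dis: "C \<inter> D = {}" if "D \<in> S" for D
  proof -
    have "C \<noteq> D" using that insert.hyps(2) by auto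
    moreover have "C \<in> insert C S" "D \<in> insert C S" using that by auto
    ultimately show ?thesis using insert.prems(2) by blast
  qed
  have CU: "C \<inter> ?U = {}" using dis by blast
  have finC: "finite C" "\<forall>D\<in>S. finite D" using insert.prems(1) by simp_all
  have finU: "finite ?U" using finC insert.hyps(1) by simp
  have QC: "Q C \<subseteq> {q. q permutes C}" and QD: "\<forall>D\<in>S. Q D \<subseteq> {q. q permutes D}" using insert.prems(3) by simp_all
  note SI = Sset_insert[OF insert.hyps(1) finC(1) finC(2) CU QC QD]
  let ?h = "\<lambda>U p. of_int (sign p) * (\<Prod>i\<in>U. a i (p i)) :: complex"
  have finQC: "finite (Q C)" using finite_permutations[OF finC(1)] QC finite_subset by blast
  have finS: "finite (Sset S Q)" using finite_permutations[OF finU] unfolding Sset_def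
    by (rule finite_subset[rotated]) auto
  have split: "?h (C \<union> ?U) (q \<circ> p') = ?h C q * ?h ?U p'" if q: "q \<in> Q C" and p': "p' \<in> Sset S Q" for q p'
  proof -
    have pm: "q permutes C" "p' permutes ?U" using q p' QC unfolding Sset_def by auto
    have sg: "sign (q \<circ> p') = sign q * sign p'"
      using sign_compose permutes_imp_permutation[OF finC(1) pm(1)] permutes_imp_permutation[OF finU pm(2)] by blast
    have "(\<Prod>i\<in>C \<union> ?U. a i ((q \<circ> p') i)) = (\<Prod>i\<in>C. a i ((q \<circ> p') i)) * (\<Prod>i\<in>?U. a i ((q \<circ> p') i))"
      by (rule prod.union_disjoint) (use finC finU CU in auto)
    also have "(\<Prod>i\<in>C. a i ((q \<circ> p') i)) = (\<Prod>i\<in>C. a i (q i))"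
    proof -
      have "\<forall>i\<in>C. p' i = i" using permutes_not_in[OF pm(2)] CU by blast
      then show ?thesis by (intro prod.cong) auto
    qed
    also have "(\<Prod>i\<in>?U. a i ((q \<circ> p') i)) = (\<Prod>i\<in>?U. a i (p' i))"
    proof -
      have "\<forall>i\<in>?U. q (p' i) = p' i"
      proof
        fix i assume "i \<in> ?U"
        then have "p' i \<in> ?U" using permutes_in_image[OF pm(2)] by simp
        then have "p' i \<notin> C" using CU by blast
        then show "q (p' i) = p' i" using permutes_not_in[OF pm(1)] by simp
      qed
      then show ?thesis by (intro prod.cong) auto
    qed
    finally show ?thesis using sg by simp
  qed
  have "(\<Sum>p\<in>Sset (insert C S) Q. ?h (\<Union>(insert C S)) p)
      = (\<Sum>x\<in>Q C \<times> Sset S Q. ?h (C \<union> ?U) ((\<lambda>(q,p'). q \<circ> p') x))"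
    unfolding SI(1) by (subst sum.reindex[OF SI(2)]) simp
  also have "\<dots> = (\<Sum>x\<in>Q C \<times> Sset S Q. ?h C (fst x) * ?h ?U (snd x))"
  proof (rule sum.cong[OF refl])
    fix x assume "x \<in> Q C \<times> Sset S Q"
    then obtain q p' where x: "x = (q,p')" "q \<in> Q C" "p' \<in> Sset S Q" by auto
    show "?h (C \<union> ?U) ((\<lambda>(q,p'). q \<circ> p') x) = ?h C (fst x) * ?h ?U (snd x)"
      using split[OF x(2,3)] x(1) by simp
  qed
  also have "\<dots> = (\<Sum>q\<in>Q C. ?h C q) * (\<Sum>p'\<in>Sset S Q. ?h ?U p')"
    by (simp add: sum_product sum.cartesian_product split_def)
  also have "(\<Sum>p'\<in>Sset S Q. ?h ?U p') = (\<Prod>D\<in>S. \<Sum>q\<in>Q D. ?h D q)"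
    using insert.hyps(3) insert.prems by auto
  finally show ?case using insert.hyps(1,2) by simp
qed



definition Qf :: "nat set set \<Rightarrow> nat set \<Rightarrow> (nat \<Rightarrow> nat) set" where
  "Qf F C = {q. q permutes C \<and> pgraph q = comp_edges F C}"

lemma mg_facts:
  assumes "mixed_graph n E D"
  shows "twosets E" "finite E" "verts E \<subseteq> {0..<n}"
proof -
  have e: "\<forall>e\<in>E. \<exists>u v. e = {u, v} \<and> u \<noteq> v \<and> u < n \<and> v < n"
    using assms unfolding mixed_graph_def by blast
  then show "twosets E" unfolding twosets_def by blast
  have "E \<subseteq> Pow {0..<n}" using e by fastforce
  then show "finite E" by (rule finite_subset) simp
  show "verts E \<subseteq> {0..<n}" using e unfolding verts_def by fastforce
qed

lemma sub_facts:
  assumes "twosets E" "finite E" "verts E \<subseteq> {0..<n}" "F \<subseteq> E"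
  shows "twosets F" "finite F" "verts F \<subseteq> {0..<n}"
  using assms unfolding twosets_def verts_def by (auto intro: finite_subset)

lemma fiber_eq:
  assumes tw: "twosets F" and fin: "finite F" and vF: "verts F \<subseteq> {0..<n}"
  shows "{p. p permutes {0..<n} \<and> pgraph p = F} = Sset (components F) (Qf F)"
proof (rule equalityI; rule subsetI)
  fix p assume "p \<in> {p. p permutes {0..<n} \<and> pgraph p = F}"
  then have p: "p permutes {0..<n}" and pg: "pgraph p = F" by auto
  have bij: "bij p" using permutes_bij[OF p] .
  have vp: "verts F = {x. p x \<noteq> x}" using verts_pgraph[OF bij] pg by simp
  have pU: "p permutes \<Union>(components F)" unfolding Union_comps
    by (rule permutes_superset[OF p]) (use vp in auto)
  have adj: "p x \<in> component F x" if "x \<in> verts F" for x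
  proof -
    have "{x, p x} \<in> F" using that vp pg unfolding pgraph_def by auto
    then show ?thesis using edge_in_comp[OF tw, of "{x, p x}" x] by auto
  qed
  have "restr C p \<in> Qf F C" if C: "C \<in> components F" for C
  proof -
    have CV: "C \<subseteq> verts F" using comp_in_verts[OF C] .
    have img: "p x \<in> C" if "x \<in> C" for x using adj[of x] comp_of_mem[OF C that] CV that by auto
    have pre: "Hilbert_Choice.inv p x \<in> C" if x: "x \<in> C" for x
    proof -
      let ?y = "Hilbert_Choice.inv p x"
      have py: "p ?y = x" using permutes_inverses[OF p] by simp
      have xm: "p x \<noteq> x" using x CV vp by auto
      then have ym: "p ?y \<noteq> ?y" using py by auto
      then have "?y \<in> verts F" using vp by simp
      then have "x \<in> component F ?y" using adj py by metis
      then have "component F x = component F ?y" by (rule comp_eq)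
      moreover have "?y \<in> component F ?y" using comp_self \<open>?y \<in> verts F\<close> by simp
      ultimately show ?thesis using comp_of_mem[OF C x] by simp
    qed
    have "bij_betw (restr C p) C C"
      unfolding bij_betw_def
    proof
      show "inj_on (restr C p) C" using permutes_inj[OF p] unfolding restr_def inj_on_def inj_def by auto
      show "restr C p ` C = C"
      proof
        show "restr C p ` C \<subseteq> C" using img unfolding restr_def by auto
        show "C \<subseteq> restr C p ` C"
        proof
          fix x assume x: "x \<in> C"
          have "x = restr C p (Hilbert_Choice.inv p x)" using pre[OF x] permutes_inverses[OF p]
            unfolding restr_def by simp
          then show "x \<in> restr C p ` C" using pre[OF x] by blast
        qed
      qed
    qed
    then have perm: "restr C p permutes C" by (rule bij_imp_permutes) (simp add: restr_def)
    have "pgraph (restr C p) = comp_edges F C"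
    proof (rule equalityI; rule subsetI)
      fix e assume "e \<in> pgraph (restr C p)"
      then obtain i where i: "e = {i, restr C p i}" "restr C p i \<noteq> i" unfolding pgraph_def by auto
      then have iC: "i \<in> C" unfolding restr_def by (auto split: if_splits)
      then have "e = {i, p i}" "p i \<noteq> i" using i unfolding restr_def by auto
      then have "e \<in> F" using pg unfolding pgraph_def by auto
      moreover have "e \<subseteq> C" using \<open>e = {i, p i}\<close> iC img by auto
      ultimately show "e \<in> comp_edges F C" unfolding comp_edges_def by auto
    next
      fix e assume "e \<in> comp_edges F C"
      then have e: "e \<in> F" "e \<subseteq> C" unfolding comp_edges_def by auto
      then obtain i where i: "e = {i, p i}" "p i \<noteq> i" using pg unfolding pgraph_def by auto
      then have "i \<in> C" using e by auto
      then show "e \<in> pgraph (restr C p)" using i unfolding pgraph_def restr_def by auto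
    qed
    then show ?thesis using perm unfolding Qf_def by simp
  qed
  then show "p \<in> Sset (components F) (Qf F)" using pU unfolding Sset_def by simp
next
  fix p assume "p \<in> Sset (components F) (Qf F)"
  then have pU: "p permutes verts F" and rC: "\<forall>C\<in>components F. restr C p \<in> Qf F C"
    unfolding Sset_def Union_comps by auto
  have p: "p permutes {0..<n}" using permutes_subset[OF pU vF] .
  have "pgraph p = F"
  proof (rule equalityI; rule subsetI)
    fix e assume "e \<in> pgraph p"
    then obtain i where i: "e = {i, p i}" "p i \<noteq> i" unfolding pgraph_def by auto
    then have iv: "i \<in> verts F" using permutes_not_in[OF pU] by blast
    let ?C = "component F i"
    have C: "?C \<in> components F" using iv unfolding components_def by simp
    have "i \<in> ?C" using comp_self[OF iv] .
    then have "e \<in> pgraph (restr ?C p)" using i unfolding pgraph_def restr_def by auto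
    then have "e \<in> comp_edges F ?C" using rC C unfolding Qf_def by auto
    then show "e \<in> F" unfolding comp_edges_def by auto
  next
    fix e assume e: "e \<in> F"
    then obtain u v where uv: "e = {u,v}" using tw unfolding twosets_def by blast
    then have uV: "u \<in> verts F" using e unfolding verts_def by auto
    let ?C = "component F u"
    have C: "?C \<in> components F" using uV unfolding components_def by simp
    have "e \<subseteq> ?C" using edge_in_comp[OF tw e] uv by simp
    then have "e \<in> pgraph (restr ?C p)" using rC C e unfolding Qf_def comp_edges_def by auto
    then obtain i where i: "e = {i, restr ?C p i}" "restr ?C p i \<noteq> i" unfolding pgraph_def by auto
    then have "i \<in> ?C" unfolding restr_def by (auto split: if_splits)
    then have "e = {i, p i}" "p i \<noteq> i" using i unfolding restr_def by auto
    then show "e \<in> pgraph p" unfolding pgraph_def by auto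
  qed
  then show "p \<in> {p. p permutes {0..<n} \<and> pgraph p = F}" using p by simp
qed



lemma om_re: "Re omega = 1/2" and om_im: "Im omega = sqrt 3 / 2"
  by (simp_all add: omega_def)

definition U6 :: "complex set" where
  "U6 = {1, omega, omega - 1, -1, -omega, 1 - omega}"

lemma cnj_om: "cnj omega = 1 - omega"
  by (simp add: complex_eq_iff om_re om_im)

lemma om_sq: "omega * omega = omega - 1"
  by (simp add: complex_eq_iff om_re om_im)

lemma om_tab:
  "omega * (omega - 1) = -1" "omega * (- omega) = 1 - omega" "omega * (1 - omega) = 1"
  "(1 - omega) * omega = 1" "(1 - omega) * (omega - 1) = omega" "(1 - omega) * (-omega) = -1"
  "(1 - omega) * (1 - omega) = - omega"
  by (simp_all add: complex_eq_iff om_re om_im algebra_simps)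

lemma om_cnj: "omega * cnj omega = 1" "cnj omega * omega = 1"
  by (simp_all add: cnj_om om_tab)

lemma U6_mult: assumes "u \<in> U6" "t \<in> {1, omega, cnj omega}" shows "t * u \<in> U6"
  using assms unfolding U6_def cnj_om
  by (elim insertE emptyE) (simp_all add: om_tab om_sq)

lemma U6_prod: "finite A \<Longrightarrow> (\<forall>x\<in>A. f x \<in> {1, omega, cnj omega}) \<Longrightarrow> prod f A \<in> U6"
proof (induct A rule: finite_induct)
  case empty then show ?case by (simp add: U6_def)
next
  case (insert x A) then show ?case using U6_mult by simp
qed

lemma U6_val: assumes "u \<in> U6"
  shows "u + cnj u = (if u \<in> {-1} \<or> u \<in> {- omega, - cnj omega} then -1 else 1) * (if u \<in> {1} \<or> u \<in> {-1} then 2 else 1)"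
    "\<not> (u \<in> {-1} \<and> u \<in> {- omega, - cnj omega})" "\<not> (u \<in> {1} \<and> u \<in> {-1})"
  using assms unfolding U6_def by (auto simp: complex_eq_iff om_re om_im)

lemma entry_vals: "{s,t} \<in> E \<Longrightarrow> n_entry E D s t \<in> {1, omega, cnj omega}"
  unfolding n_entry_def by auto

lemma entry_zero: assumes "mixed_graph n E D" "{s,t} \<notin> E" shows "n_entry E D s t = 0"
  using assms unfolding mixed_graph_def n_entry_def by (auto simp: insert_commute)

lemma entry_herm: assumes "mixed_graph n E D" shows "n_entry E D t s = cnj (n_entry E D s t)"
  using assms unfolding mixed_graph_def n_entry_def by (auto simp: insert_commute)

lemma cw_prod: assumes "distinct vs" "2 \<le> length vs"
  shows "cycle_weight E D vs = (\<Prod>x\<in>set vs. n_entry E D x (cycle_of_list vs x))"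
proof -
  have "cycle_weight E D vs = (\<Prod>i<length vs. n_entry E D (vs ! i) (cycle_of_list vs (vs ! i)))"
    unfolding cycle_weight_def using cyc_next[OF assms(1)] by (intro prod.cong) auto
  also have "\<dots> = (\<Prod>x\<in>set vs. n_entry E D x (cycle_of_list vs x))"
    by (rule prod.reindex_bij_betw[OF bij_betw_nth[OF assms(1) refl refl]])
  finally show ?thesis .
qed

lemma enum_card: "cycle_enum vs C G \<Longrightarrow> card C = length vs \<and> 3 \<le> length vs"
  unfolding cycle_enum_def using distinct_card by force

lemma comp_value:
  assumes mg: "mixed_graph n E D" and FE: "F \<subseteq> E" and C: "C \<in> components F"
    and el: "card C = 2 \<or> is_cycle C (comp_edges F C)"
  defines "cyc \<equiv> \<lambda>W. cycle_has_weight_in E D F W C"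
  shows "(\<Sum>q\<in>Qf F C. of_int (sign q) * (\<Prod>i\<in>C. n_entry E D i (q i))) =
     (-1)^(card C - 1) * (if cyc {-1} \<or> cyc {-omega, -cnj omega} then -1 else 1)
        * (if cyc {1} \<or> cyc {-1} then 2 else 1)"
    "\<not> (cyc {-1} \<and> cyc {-omega, -cnj omega})" "\<not> (cyc {1} \<and> cyc {-1})"
proof -
  note mgf = mg_facts[OF mg]
  note sf = sub_facts[OF mgf FE]
  let ?a = "n_entry E D"
  have finC: "finite C" using comp_in_verts[OF C] finite_verts[OF sf(2,1)] finite_subset by blast
  have "(\<Sum>q\<in>Qf F C. of_int (sign q) * (\<Prod>i\<in>C. ?a i (q i))) =
     (-1)^(card C - 1) * (if cyc {-1} \<or> cyc {-omega, -cnj omega} then -1 else 1)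
        * (if cyc {1} \<or> cyc {-1} then 2 else 1) \<and>
    \<not> (cyc {-1} \<and> cyc {-omega, -cnj omega}) \<and> \<not> (cyc {1} \<and> cyc {-1})"
  proof (cases "card C = 2")
    case True
    have nc: "\<not> cyc W" for W
      unfolding cyc_def cycle_has_weight_in_def using enum_card True by fastforce
    obtain u v where uv: "C = {u,v}" "u \<noteq> v" using card_2_iff[THEN iffD1, OF True] by blast
    have CF: "e = C" if "e \<in> F" "e \<subseteq> C" for e
    proof -
      have "\<exists>x y. e = {x,y} \<and> x \<noteq> y" using sf(1) that(1) unfolding twosets_def by simp
      then obtain x y where "e = {x,y}" "x \<noteq> y" by blast
      then have "card e = 2" by simp
      then show ?thesis using card_subset_eq[OF finC that(2)] True by simp
    qed
    obtain c where c: "c \<in> verts F" "C = component F c" using C unfolding components_def by auto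
    then obtain e where e: "e \<in> F" "c \<in> e" unfolding verts_def by auto
    have "e \<subseteq> C" using edge_in_comp[OF sf(1) e] c by simp
    then have CinF: "C \<in> F" using CF e by auto
    have ce: "comp_edges F C = {C}" using CF CinF unfolding comp_edges_def by auto
    let ?t = "Transposition.transpose u v"
    have pgt: "pgraph ?t = {C}"
    proof (rule equalityI; rule subsetI)
      fix e assume "e \<in> pgraph ?t"
      then obtain i where i: "e = {i, ?t i}" "?t i \<noteq> i" unfolding pgraph_def by auto
      then have "i = u \<or> i = v" by (metis transpose_apply_other)
      then show "e \<in> {C}" using i uv by (auto simp: insert_commute)
    next
      fix e assume "e \<in> {C}"
      then have "e = {u, ?t u}" "?t u \<noteq> u" using uv by auto
      then show "e \<in> pgraph ?t" unfolding pgraph_def by blast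
    qed
    have Q: "Qf F C = {?t}"
    proof (rule equalityI; rule subsetI)
      fix q assume "q \<in> Qf F C"
      then have q0: "q permutes C" "pgraph q = {C}" unfolding Qf_def ce by auto
      then have q: "q permutes {u,v}" "pgraph q = {{u,v}}" using uv by auto
      have qu: "q u \<in> {u,v}" "q v \<in> {u,v}" using permutes_in_image[OF q(1)] by auto
      have inj: "inj q" using permutes_inj[OF q(1)] .
      have out: "x \<notin> {u,v} \<Longrightarrow> q x = x" for x using permutes_not_in[OF q(1)] by simp
      have "q u \<noteq> u"
      proof
        assume "q u = u"
        then have "q v = v" using qu inj uv(2) by (metis injD insert_iff singletonD)
        have "\<forall>x. q x = x"
        proof
          fix x show "q x = x" using out[of x] \<open>q u = u\<close> \<open>q v = v\<close>
            by (cases "x = u"; cases "x = v") auto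
        qed
        then have "pgraph q = {}" unfolding pgraph_def by auto
        then show False using q(2) by simp
      qed
      then have quv: "q u = v" using qu by auto
      then have "q v = u" using qu inj uv(2) by (metis injD insert_iff singletonD)
      then have "q = ?t" using quv out by (auto simp: transpose_def fun_eq_iff)
      then show "q \<in> {?t}" by simp
    next
      fix q assume "q \<in> {?t}"
      then show "q \<in> Qf F C" unfolding Qf_def ce using pgt permutes_swap_id[of u C v] uv by auto
    qed
    have sg: "sign ?t = -1" using uv(2) by (simp add: sign_swap_id)
    have "(\<Prod>i\<in>C. ?a i (?t i)) = ?a u v * ?a v u" using uv by simp
    also have "\<dots> = ?a u v * cnj (?a u v)" using entry_herm[OF mg] by metis
    also have "\<dots> = 1"
    proof -
      have "{u,v} \<in> E" using CinF FE uv by auto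
      then have "?a u v \<in> {1, omega, cnj omega}" by (rule entry_vals)
      then show ?thesis using om_cnj by auto
    qed
    finally have "(\<Sum>q\<in>Qf F C. of_int (sign q) * (\<Prod>i\<in>C. ?a i (q i))) = -1" using Q sg by simp
    then show ?thesis using nc True by simp
  next
    case False
    then have "is_cycle C (comp_edges F C)" using el by simp
    then obtain vs where vs: "cycle_enum vs C (comp_edges F C)" unfolding is_cycle_def by blast
    have d: "distinct vs" and l3: "3 \<le> length vs" and sv: "set vs = C"
      and G: "comp_edges F C = {{vs ! i, vs ! ((i + 1) mod length vs)} | i. i < length vs}"
      using vs unfolding cycle_enum_def by auto
    have l2: "2 \<le> length vs" using l3 by simp
    have cardC: "card C = length vs" using enum_card[OF vs] by simp
    let ?r = "cycle_of_list vs"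
    let ?ri = "Hilbert_Choice.inv ?r"
    note props = cycle_list_props[OF d l3]
    have pgr: "pgraph ?r = comp_edges F C" using pgraph_cycle[OF d l2] G by simp
    have rperm: "?r permutes C" using props(1) sv by simp
    have bijr: "bij ?r" using permutes_bij[OF rperm] .
    have v0: "vs ! 0 \<in> C" using l3 sv by (cases vs) auto
    have Q: "Qf F C = {?r, ?ri}"
    proof (rule equalityI; rule subsetI)
      fix q assume "q \<in> Qf F C"
      then have q: "q permutes C" "pgraph q = pgraph ?r" unfolding Qf_def using pgr by auto
      show "q \<in> {?r, ?ri}"
        using cycle_unique[OF rperm _ _ v0 _ q] props sv by auto
    next
      fix q assume "q \<in> {?r, ?ri}"
      then show "q \<in> Qf F C" unfolding Qf_def
        using rperm permutes_inv[OF rperm] pgr pgraph_inv[OF bijr] by auto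
    qed
    have neq: "?r \<noteq> ?ri"
    proof
      assume eq: "?r = ?ri"
      have "?r (?r (vs ! 0)) = vs ! 0"
        using permutes_inverses[OF rperm] by (metis eq)
      then show False using props(3) v0 sv by auto
    qed
    define W where "W = (\<Prod>i\<in>C. ?a i (?r i))"
    have sgr: "sign ?r = (-1) ^ (card C - 1)" using sign_cycle[OF d] l3 cardC by (cases vs) auto
    have sgri: "sign ?ri = sign ?r" using sign_inverse[OF permutation_of_cycle] .
    have Wri: "(\<Prod>i\<in>C. ?a i (?ri i)) = cnj W"
    proof -
      have "(\<Prod>i\<in>C. ?a i (?ri i)) = (\<Prod>j\<in>C. ?a (?r j) (?ri (?r j)))"
        by (rule prod.reindex_bij_betw[symmetric, OF permutes_imp_bij[OF rperm]])
      also have "\<dots> = (\<Prod>j\<in>C. cnj (?a j (?r j)))"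
      proof (rule prod.cong[OF refl])
        fix j show "?a (?r j) (?ri (?r j)) = cnj (?a j (?r j))"
          using permutes_inverses(2)[OF rperm, of j] entry_herm[OF mg, of "?r j" j] by simp
      qed
      finally show ?thesis unfolding W_def cnj_prod by simp
    qed
    have WU: "W \<in> U6" unfolding W_def
    proof (rule U6_prod[OF finC], rule ballI)
      fix j assume j: "j \<in> C"
      have "{j, ?r j} \<in> pgraph ?r" using props(2) j sv unfolding pgraph_def by auto
      then have "{j, ?r j} \<in> E" using pgr FE unfolding comp_edges_def by auto
      then show "?a j (?r j) \<in> {1, omega, cnj omega}" by (rule entry_vals)
    qed
    have cyciff: "cyc Ws \<longleftrightarrow> W \<in> Ws" if cl: "\<forall>w\<in>Ws. cnj w \<in> Ws" for Ws
    proof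
      assume "W \<in> Ws"
      moreover have "cycle_weight E D vs = W" unfolding W_def using cw_prod[OF d l2] sv by simp
      ultimately show "cyc Ws" unfolding cyc_def cycle_has_weight_in_def using vs by blast
    next
      assume "cyc Ws"
      then obtain vs' where vs': "cycle_enum vs' C (comp_edges F C)" "cycle_weight E D vs' \<in> Ws"
        unfolding cyc_def cycle_has_weight_in_def by blast
      have d': "distinct vs'" and l3': "3 \<le> length vs'" and sv': "set vs' = C"
        and G': "comp_edges F C = {{vs' ! i, vs' ! ((i + 1) mod length vs')} | i. i < length vs'}"
        using vs'(1) unfolding cycle_enum_def by auto
      let ?r' = "cycle_of_list vs'"
      have "?r' \<in> Qf F C" unfolding Qf_def using cycle_permutes[of vs'] sv' pgraph_cycle[OF d'] l3' G' by auto
      then have "?r' = ?r \<or> ?r' = ?ri" using Q by simp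
      moreover have "cycle_weight E D vs' = (\<Prod>i\<in>C. ?a i (?r' i))" using cw_prod[OF d'] l3' sv' by simp
      ultimately have "cycle_weight E D vs' = W \<or> cycle_weight E D vs' = cnj W"
        using Wri unfolding W_def by auto
      then show "W \<in> Ws" using vs'(2) cl by (metis complex_cnj_cnj)
    qed
    have c1: "cyc {1} \<longleftrightarrow> W \<in> {1}" by (rule cyciff) simp
    have c2: "cyc {-1} \<longleftrightarrow> W \<in> {-1}" by (rule cyciff) simp
    have c3: "cyc {-omega, -cnj omega} \<longleftrightarrow> W \<in> {-omega, -cnj omega}" by (rule cyciff) auto
    have "(\<Sum>q\<in>Qf F C. of_int (sign q) * (\<Prod>i\<in>C. ?a i (q i)))
        = of_int (sign ?r) * W + of_int (sign ?ri) * cnj W"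
      unfolding Q using neq Wri W_def by simp
    also have "\<dots> = (-1)^(card C - 1) * (W + cnj W)" using sgr sgri by (simp add: algebra_simps)
    finally show ?thesis using U6_val[OF WU] c1 c2 c3 by simp
  qed
  then show "(\<Sum>q\<in>Qf F C. of_int (sign q) * (\<Prod>i\<in>C. n_entry E D i (q i))) =
     (-1)^(card C - 1) * (if cyc {-1} \<or> cyc {-omega, -cnj omega} then -1 else 1)
        * (if cyc {1} \<or> cyc {-1} then 2 else 1)"
    "\<not> (cyc {-1} \<and> cyc {-omega, -cnj omega})" "\<not> (cyc {1} \<and> cyc {-1})" by auto
qed



lemma prod_neg: "finite A \<Longrightarrow> (\<Prod>x\<in>A. - f x) = (-1) ^ card A * (\<Prod>x\<in>A. f x :: complex)"
  by (induct A rule: finite_induct) auto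

lemma coeff_char:
  assumes mg: "mixed_graph n E D" and k: "k \<le> n"
  shows "coeff (char_poly (N_mat n E D)) (n - k) =
    (-1)^k * (\<Sum>p\<in>{p. p permutes {0..<n} \<and> card {i. p i \<noteq> i} = k}.
        of_int (sign p) * (\<Prod>i\<in>{i. p i \<noteq> i}. n_entry E D i (p i)))"
proof -
  let ?a = "n_entry E D"
  let ?A = "N_mat n E D"
  let ?M = "char_poly_matrix ?A"
  have Ac: "?A \<in> carrier_mat n n" unfolding N_mat_def by simp
  have Mc: "?M \<in> carrier_mat n n" using Ac by simp
  have diag: "?a i i = 0" for i
  proof (rule entry_zero[OF mg])
    show "{i, i} \<notin> E" using mg_facts(1)[OF mg] unfolding twosets_def by (auto simp: doubleton_eq_iff)
  qed
  have entry: "?M $$ (i,j) = (if i = j then monom 1 1 else [:- ?a i j:])" if "i < n" "j < n" for i j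
    using that diag unfolding char_poly_matrix_def N_mat_def by (simp add: monom_Suc)
  let ?mv = "\<lambda>p. {i. p i \<noteq> (i::nat)}"
  have trm: "coeff (of_int (sign p) * (\<Prod>i = 0..<n. ?M $$ (i, p i))) (n - k) =
     (if card (?mv p) = k then (-1)^k * (of_int (sign p) * (\<Prod>i\<in>?mv p. ?a i (p i))) else 0)"
    if p: "p permutes {0..<n}" for p
  proof -
    have mvsub: "?mv p \<subseteq> {0..<n}" using permutes_not_in[OF p] by (metis (mono_tags) mem_Collect_eq subsetI)
    have fin: "finite (?mv p)" using mvsub finite_subset by blast
    have "(\<Prod>i = 0..<n. ?M $$ (i, p i)) = (\<Prod>i = 0..<n. if p i = i then monom 1 1 else [:- ?a i (p i):])"
      using entry permutes_in_image[OF p] by (intro prod.cong) auto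
    also have "\<dots> = (\<Prod>i\<in>{0..<n} \<inter> {i. p i = i}. monom 1 1) * (\<Prod>i\<in>{0..<n} \<inter> - {i. p i = i}. [:- ?a i (p i):])"
      by (rule prod.If_cases) simp
    also have "{0..<n} \<inter> - {i. p i = i} = ?mv p" using mvsub by auto
    also have "(\<Prod>i\<in>{0..<n} \<inter> {i. p i = i}. monom (1::complex) 1) = monom 1 (card ({0..<n} \<inter> {i. p i = i}))"
      by (simp add: monom_power)
    also have "card ({0..<n} \<inter> {i. p i = i}) = n - card (?mv p)"
    proof -
      have "{0..<n} \<inter> {i. p i = i} = {0..<n} - ?mv p" by auto
      then show ?thesis using card_Diff_subset[OF fin mvsub] by simp
    qed
    also have "(\<Prod>i\<in>?mv p. [:- ?a i (p i):]) = [:\<Prod>i\<in>?mv p. - ?a i (p i):]" by (rule prod_to_poly)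
    also have "(\<Prod>i\<in>?mv p. - ?a i (p i)) = (-1)^card (?mv p) * (\<Prod>i\<in>?mv p. ?a i (p i))"
      by (rule prod_neg[OF fin])
    finally have "coeff (of_int (sign p) * (\<Prod>i = 0..<n. ?M $$ (i, p i))) (n - k) =
       (if n - card (?mv p) = n - k then of_int (sign p) * ((-1)^card (?mv p) * (\<Prod>i\<in>?mv p. ?a i (p i))) else 0)"
      by (simp add: of_int_poly coeff_monom)
    moreover have "card (?mv p) \<le> n" using card_mono[OF _ mvsub] by simp
    moreover have "n - card (?mv p) = n - k \<longleftrightarrow> card (?mv p) = k" using k calculation(2) by linarith
    ultimately show ?thesis by simp
  qed
  have finP: "finite {p. p permutes {0..<n}}" using finite_permutations by blast
  have "coeff (char_poly ?A) (n - k) = (\<Sum>p\<in>{p. p permutes {0..<n}}. coeff (of_int (sign p) * (\<Prod>i = 0..<n. ?M $$ (i, p i))) (n - k))"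
    unfolding char_poly_def det_def'[OF Mc] coeff_sum by simp
  also have "\<dots> = (\<Sum>p\<in>{p. p permutes {0..<n}}. if card (?mv p) = k then (-1)^k * (of_int (sign p) * (\<Prod>i\<in>?mv p. ?a i (p i))) else 0)"
    using trm by (intro sum.cong) auto
  also have "\<dots> = (\<Sum>p\<in>{p\<in>{p. p permutes {0..<n}}. card (?mv p) = k}. (-1)^k * (of_int (sign p) * (\<Prod>i\<in>?mv p. ?a i (p i))))"
    by (rule sum.inter_filter[OF finP, symmetric])
  also have "\<dots> = (-1)^k * (\<Sum>p\<in>{p. p permutes {0..<n} \<and> card {i. p i \<noteq> i} = k}. of_int (sign p) * (\<Prod>i\<in>{i. p i \<noteq> i}. ?a i (p i)))"
    by (simp add: sum_distrib_left)
  finally show ?thesis .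
qed



lemma powi_split: "(-1::complex) powi (- int k + int r + int s + int m) = (-1)^k * ((-1)^r * (-1)^(m + s))"
proof -
  have e: "- int k + int r + int s + int m = (- int k) + int (r + s + m)" by simp
  have "(-1::complex) powi ((- int k) + int (r + s + m)) = (-1) powi (- int k) * (-1) powi (int (r + s + m))"
    by (rule power_int_add) simp
  also have "\<dots> = (-1)^k * (-1)^(r + s + m)"
    by (simp only: power_int_minus_one_minus power_int_of_nat)
  finally show ?thesis unfolding e by (simp add: power_add algebra_simps)
qed

lemma prod_ifpow: "finite A \<Longrightarrow> (\<Prod>C\<in>A. if P C then c else 1) = c ^ card {C\<in>A. P C}"
proof -
  assume fin: "finite A"
  have "(\<Prod>C\<in>A. if P C then c else 1) = (\<Prod>C\<in>A \<inter> {C. P C}. c) * (\<Prod>C\<in>A \<inter> - {C. P C}. 1)"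
    by (rule prod.If_cases[OF fin])
  also have "A \<inter> {C. P C} = {C\<in>A. P C}" by auto
  finally show ?thesis by simp
qed

lemma card_or: "finite A \<Longrightarrow> \<forall>C\<in>A. \<not> (P C \<and> Q C) \<Longrightarrow> card {C\<in>A. P C \<or> Q C} = card {C\<in>A. P C} + card {C\<in>A. Q C}"
proof -
  assume fin: "finite A" and ex: "\<forall>C\<in>A. \<not> (P C \<and> Q C)"
  have "{C\<in>A. P C \<or> Q C} = {C\<in>A. P C} \<union> {C\<in>A. Q C}" by auto
  moreover have "{C\<in>A. P C} \<inter> {C\<in>A. Q C} = {}" using ex by auto
  ultimately show ?thesis using fin by (simp add: card_Un_disjoint)
qed

lemma count_prod:
  fixes N SN P :: "nat set \<Rightarrow> bool"
  assumes fin: "finite A" and ne: "\<forall>C\<in>A. finite C \<and> C \<noteq> {}" and dis: "disjoint A"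
    and ex1: "\<forall>C\<in>A. \<not> (N C \<and> SN C)" and ex2: "\<forall>C\<in>A. \<not> (P C \<and> N C)"
  shows "(\<Prod>C\<in>A. (-1::complex)^(card C - 1) * (if N C \<or> SN C then -1 else 1) * (if P C \<or> N C then 2 else 1))
      = (-1)^(card (\<Union>A) - card A) * (-1)^(card {C\<in>A. N C} + card {C\<in>A. SN C}) * 2^(card {C\<in>A. P C} + card {C\<in>A. N C})"
proof -
  have s: "(\<Sum>C\<in>A. card C - 1) + card A = card (\<Union>A)"
  proof -
    have "(\<Sum>C\<in>A. card C - 1) + card A = (\<Sum>C\<in>A. (card C - 1) + 1)"
      by (simp add: sum_Suc)
    also have "\<dots> = (\<Sum>C\<in>A. card C)"
    proof (rule sum.cong[OF refl])
      fix C assume "C \<in> A" then have "card C \<ge> 1" using ne by (simp add: Suc_leI card_gt_0_iff)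
      then show "card C - 1 + 1 = card C" by simp
    qed
    also have "\<dots> = card (\<Union>A)" using card_Union_disjoint[OF dis] ne by simp
    finally show ?thesis .
  qed
  have "(\<Prod>C\<in>A. (-1::complex)^(card C - 1) * (if N C \<or> SN C then -1 else 1) * (if P C \<or> N C then 2 else 1))
      = (\<Prod>C\<in>A. (-1::complex)^(card C - 1)) * (\<Prod>C\<in>A. if N C \<or> SN C then -1 else 1) * (\<Prod>C\<in>A. if P C \<or> N C then 2 else 1)"
    by (simp add: prod.distrib)
  also have "(\<Prod>C\<in>A. (-1::complex)^(card C - 1)) = (-1)^(card (\<Union>A) - card A)"
  proof -
    have "card (\<Union>A) - card A = (\<Sum>C\<in>A. card C - 1)" using s by linarith
    then show ?thesis by (simp add: power_sum[symmetric])
  qed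
  also have "(\<Prod>C\<in>A. if N C \<or> SN C then -1 else 1) = (-1::complex)^(card {C\<in>A. N C} + card {C\<in>A. SN C})"
    by (subst prod_ifpow[OF fin]) (simp add: card_or[OF fin ex1])
  also have "(\<Prod>C\<in>A. if P C \<or> N C then 2 else 1) = (2::complex)^(card {C\<in>A. P C} + card {C\<in>A. N C})"
    by (subst prod_ifpow[OF fin]) (simp add: card_or[OF fin ex2])
  finally show ?thesis .
qed

theorem theorem2p6:
  fixes n :: nat and E :: "nat set set" and D :: "(nat \<times> nat) set" and k :: nat
  assumes "mixed_graph n E D" and "k \<le> n"
  shows "coeff (char_poly (N_mat n E D)) (n - k) =
    (\<Sum>F\<in>{F. elementary E F \<and> card (verts F) = k}.
       (-1::complex) powi (- int k + int (rank_r F) + int (l_sn E D F) + int (l_n E D F))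
       * 2 ^ (l_p E D F + l_n E D F))"
proof -
  note mg = assms(1)
  note mgf = mg_facts[OF mg]
  let ?a = "n_entry E D"
  let ?f = "\<lambda>p. of_int (sign p) * (\<Prod>i\<in>{i. p i \<noteq> i}. ?a i (p i)) :: complex"
  let ?Pk = "{p. p permutes {0..<n} \<and> card {i. p i \<noteq> i} = k}"
  let ?S = "{p\<in>?Pk. pgraph p \<subseteq> E}"
  let ?T = "{F. elementary E F \<and> card (verts F) = k}"
  let ?val = "\<lambda>F. (-1::complex)^(rank_r F) * (-1)^(l_n E D F + l_sn E D F) * 2^(l_p E D F + l_n E D F)"
  have mvsub: "{i. p i \<noteq> i} \<subseteq> {0..<n}" if "p permutes {0..<n}" for p
    using permutes_not_in[OF that] by (metis (mono_tags) mem_Collect_eq subsetI)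
  have finPk: "finite ?Pk"
    by (rule finite_subset[OF _ finite_permutations[of "{0..<n}"]]) auto
  have finS: "finite ?S" using finPk by (rule finite_subset[rotated]) auto
  have finT: "finite ?T"
    by (rule finite_subset[of _ "Pow E"]) (use mgf(2) in \<open>auto simp: elementary_def\<close>)
  have step1: "sum ?f ?Pk = sum ?f ?S"
  proof (rule sum.mono_neutral_right[OF finPk])
    show "?S \<subseteq> ?Pk" by auto
    show "\<forall>p\<in>?Pk - ?S. ?f p = 0"
    proof
      fix p assume p: "p \<in> ?Pk - ?S"
      then obtain e where e: "e \<in> pgraph p" "e \<notin> E" by auto
      then obtain i where i: "e = {i, p i}" "p i \<noteq> i" unfolding pgraph_def by auto
      have "?a i (p i) = 0" using entry_zero[OF mg] e i by simp
      moreover have "finite {i. p i \<noteq> i}" using mvsub p finite_subset by blast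
      ultimately have "(\<Prod>i\<in>{i. p i \<noteq> i}. ?a i (p i)) = 0" using i by (intro prod_zero) auto
      then show "?f p = 0" by simp
    qed
  qed
  have fib: "{p\<in>?S. pgraph p = F} = {p. p permutes {0..<n} \<and> pgraph p = F}" if F: "F \<in> ?T" for F
  proof -
    have FE: "F \<subseteq> E" using F unfolding elementary_def by auto
    have "card {i. p i \<noteq> i} = k" if "p permutes {0..<n}" "pgraph p = F" for p
      using verts_pgraph[OF permutes_bij[OF that(1)]] that(2) F by simp
    then show ?thesis using FE by auto
  qed
  have img: "pgraph ` ?S \<subseteq> ?T"
  proof
    fix F assume "F \<in> pgraph ` ?S"
    then obtain p where p: "p permutes {0..<n}" "card {i. p i \<noteq> i} = k" "pgraph p \<subseteq> E" "F = pgraph p" by auto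
    note sf = sub_facts[OF mgf p(3)]
    have "p \<in> Sset (components F) (Qf F)"
      using fiber_eq[OF sf[folded p(4)]] p by auto
    then have "\<forall>C\<in>components F. restr C p \<in> Qf F C" unfolding Sset_def by auto
    then have "\<forall>C\<in>components F. card C = 2 \<or> is_cycle C (comp_edges F C)"
      using comp_perm_elem[OF sf(1,2)[folded p(4)]] unfolding Qf_def by blast
    then have "elementary E F" unfolding elementary_def using p by auto
    moreover have "card (verts F) = k" using verts_pgraph[OF permutes_bij[OF p(1)]] p by simp
    ultimately show "F \<in> ?T" by simp
  qed
  have step3: "sum ?f {p\<in>?S. pgraph p = F} = ?val F" if F: "F \<in> ?T" for F
  proof -
    have FE: "F \<subseteq> E" and el: "\<forall>C\<in>components F. card C = 2 \<or> is_cycle C (comp_edges F C)"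
      using F unfolding elementary_def by auto
    note sf = sub_facts[OF mgf FE]
    have comps_fin: "finite (components F)" using finite_comps[OF sf(2,1)] .
    have Cfin: "\<forall>C\<in>components F. finite C \<and> C \<noteq> {}"
      using comp_in_verts finite_verts[OF sf(2,1)] comp_nonempty finite_subset by blast
    have dis: "\<forall>C\<in>components F. \<forall>C'\<in>components F. C \<noteq> C' \<longrightarrow> C \<inter> C' = {}"
      using comps_disjoint by blast
    have QQ: "\<forall>C\<in>components F. Qf F C \<subseteq> {q. q permutes C}" unfolding Qf_def by auto
    have "sum ?f {p\<in>?S. pgraph p = F} = sum ?f (Sset (components F) (Qf F))"
      using fib[OF F] fiber_eq[OF sf] by simp
    also have "\<dots> = (\<Sum>p\<in>Sset (components F) (Qf F). of_int (sign p) * (\<Prod>i\<in>\<Union>(components F). ?a i (p i)))"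
    proof (rule sum.cong[OF refl])
      fix p assume "p \<in> Sset (components F) (Qf F)"
      then have "p permutes {0..<n}" "pgraph p = F" using fiber_eq[OF sf] by auto
      then have "{i. p i \<noteq> i} = \<Union>(components F)"
        using verts_pgraph[OF permutes_bij] Union_comps by metis
      then show "?f p = of_int (sign p) * (\<Prod>i\<in>\<Union>(components F). ?a i (p i))" by simp
    qed
    also have "\<dots> = (\<Prod>C\<in>components F. \<Sum>q\<in>Qf F C. of_int (sign q) * (\<Prod>i\<in>C. ?a i (q i)))"
      by (rule glue_prod[OF comps_fin _ dis QQ]) (use Cfin in auto)
    also have "\<dots> = (\<Prod>C\<in>components F. (-1::complex)^(card C - 1)
        * (if cycle_has_weight_in E D F {-1} C \<or> cycle_has_weight_in E D F {-omega, -cnj omega} C then -1 else 1)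
        * (if cycle_has_weight_in E D F {1} C \<or> cycle_has_weight_in E D F {-1} C then 2 else 1))"
      using comp_value(1)[OF mg FE _ ] el by (intro prod.cong) auto
    also have "\<dots> = ?val F"
    proof -
      have dj: "disjoint (components F)" unfolding disjoint_def pairwise_def disjnt_def using dis by blast
      have ex1: "\<forall>C\<in>components F. \<not> (cycle_has_weight_in E D F {-1} C \<and> cycle_has_weight_in E D F {-omega, -cnj omega} C)"
        using comp_value(2)[OF mg FE] el by blast
      have ex2: "\<forall>C\<in>components F. \<not> (cycle_has_weight_in E D F {1} C \<and> cycle_has_weight_in E D F {-1} C)"
        using comp_value(3)[OF mg FE] el by blast
      show ?thesis
        using count_prod[OF comps_fin Cfin dj ex1 ex2]
        unfolding Union_comps l_n_def l_sn_def l_p_def num_cycles_def rank_r_def by simp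
    qed
    finally show ?thesis .
  qed
  have "coeff (char_poly (N_mat n E D)) (n - k) = (-1)^k * sum ?f ?Pk"
    by (rule coeff_char[OF mg assms(2)])
  also have "sum ?f ?Pk = (\<Sum>F\<in>?T. sum ?f {p\<in>?S. pgraph p = F})"
    unfolding step1 by (rule sum.group[OF finS finT img, symmetric])
  also have "\<dots> = (\<Sum>F\<in>?T. ?val F)" using step3 by (rule sum.cong[OF refl])
  also have "(-1)^k * (\<Sum>F\<in>?T. ?val F) = (\<Sum>F\<in>?T. (-1)^k * ?val F)" by (simp add: sum_distrib_left)
  also have "\<dots> = (\<Sum>F\<in>?T. (-1::complex) powi (- int k + int (rank_r F) + int (l_sn E D F) + int (l_n E D F))
       * 2 ^ (l_p E D F + l_n E D F))"
  proof (rule sum.cong[OF refl])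
    fix F show "(-1)^k * ?val F = (-1::complex) powi (- int k + int (rank_r F) + int (l_sn E D F) + int (l_n E D F))
       * 2 ^ (l_p E D F + l_n E D F)"
      unfolding powi_split by (simp add: algebra_simps)
  qed
  finally show ?thesis .
qed

end
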